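(* A matrix $A\in\mathcal{C}_n$ is irreducible with respect to the cone $S_+(n)$ if and only if the linear span of the set of minimal zeros of $A$ equals $\mathbb{R}^n$. In particular, in that case $A$ has at least $n$ linearly independent minimal zeros.
   Context: $\mathcal{C}_n$ denotes the cone of copositive matrices: real symmetric $n\times n$ matrices $A$ with $x^TAx\ge 0$ for all $x\in\mathbb{R}^n_+$. $S_+(n)$ is the cone of positive semidefinite $n\times n$ matrices. For $A\in\mathcal{C}_n$, a zero of $A$ is a nonzero vector $u\in\mathbb{R}^n_+$ with $u^TAu=0$; its support is $\operatorname{Supp}(u)=\{i:u_i\ne0\}$; a zero $u$ is minimal if there is no zero $v$ with $\operatorname{Supp}(v)\subsetneq\operatorname{Supp}(u)$. For $A\in\mathcal{C}_n$ and $\mathcal{M}\subset\mathcal{C}_n$, $A$ is irreducible with respect to $\mathcal{M}$ if there do not exist $\gamma>0$ and $M\in\mathcal{M}\setminus\{0\}$ with $A-\gamma M\in\mathcal{C}_n$. *)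

theory Defs
  imports "HOL-Analysis.Analysis"
begin

text \<open>Real symmetric n x n matrices are represented as real^'n^'n with transpose A = A;
  the dimension n is CARD('n).\<close>

definition nonneg_vec :: "real^'n \<Rightarrow> bool" where
  "nonneg_vec x \<longleftrightarrow> (\<forall>i. 0 \<le> x $ i)"

definition copositive :: "real^'n^'n \<Rightarrow> bool" where
  "copositive A \<longleftrightarrow> transpose A = A \<and> (\<forall>x. nonneg_vec x \<longrightarrow> 0 \<le> x \<bullet> (A *v x))"

definition psd :: "real^'n^'n \<Rightarrow> bool" where
  "psd A \<longleftrightarrow> transpose A = A \<and> (\<forall>x. 0 \<le> x \<bullet> (A *v x))"

definition is_zero_of :: "real^'n^'n \<Rightarrow> real^'n \<Rightarrow> bool" where
  "is_zero_of A u \<longleftrightarrow> u \<noteq> 0 \<and> nonneg_vec u \<and> u \<bullet> (A *v u) = 0"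

definition supp :: "real^'n \<Rightarrow> 'n set" where
  "supp u = {i. u $ i \<noteq> 0}"

definition is_minimal_zero :: "real^'n^'n \<Rightarrow> real^'n \<Rightarrow> bool" where
  "is_minimal_zero A u \<longleftrightarrow> is_zero_of A u \<and> \<not> (\<exists>v. is_zero_of A v \<and> supp v \<subset> supp u)"

definition irreducible_wrt :: "real^'n^'n \<Rightarrow> (real^'n^'n) set \<Rightarrow> bool" where
  "irreducible_wrt A \<M> \<longleftrightarrow>
     \<not> (\<exists>\<gamma>>0. \<exists>M \<in> \<M> - {0}. copositive (A - \<gamma> *\<^sub>R M))"

end

theory Submission
  imports Defs
begin

lemma quad_lemma:
  fixes p q d :: real
  assumes "d > 0" and h: "\<And>t. 0 < t \<Longrightarrow> t < d \<Longrightarrow> 0 \<le> t*p + t^2*q"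
  shows "0 \<le> p"
proof (rule ccontr)
  assume "\<not> 0 \<le> p"
  hence p: "p < 0" by simp
  define t where "t = min (d/2) (- p / (2*(\<bar>q\<bar>+1)))"
  have "0 < - p / (2*(\<bar>q\<bar>+1))" using p by (intro divide_pos_pos) auto
  hence t0: "0 < t" using assms(1) by (simp add: t_def)
  have td: "t < d" using assms(1) by (simp add: t_def)
  have "t * \<bar>q\<bar> \<le> (- p / (2*(\<bar>q\<bar>+1))) * \<bar>q\<bar>"
    by (rule mult_right_mono) (auto simp: t_def)
  also have "\<dots> = (-p) * (\<bar>q\<bar> / (2*(\<bar>q\<bar>+1)))" by simp
  also have "\<dots> < (-p) * 1"
  proof (rule mult_strict_left_mono)
    show "\<bar>q\<bar> / (2*(\<bar>q\<bar>+1)) < 1" by (simp add: divide_less_eq)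
  qed (use p in simp)
  finally have "p + t*\<bar>q\<bar> < 0" by simp
  hence "t * (p + t*\<bar>q\<bar>) < 0" using t0 by (simp add: mult_pos_neg)
  moreover have "t*p + t^2*q \<le> t * (p + t*\<bar>q\<bar>)"
  proof -
    have "t*t*q \<le> t*t*\<bar>q\<bar>" using t0 by (intro mult_left_mono) auto
    thus ?thesis by (simp add: power2_eq_square algebra_simps)
  qed
  ultimately show False using h[OF t0 td] by simp
qed

lemma sym_inner:
  fixes C :: "real^'n^'n"
  assumes "transpose C = C"
  shows "x \<bullet> (C *v y) = y \<bullet> (C *v x)"
proof -
  have "x \<bullet> (C *v y) = (x v* C) \<bullet> y" by (simp add: dot_lmul_matrix)
  also have "x v* C = C *v x" by (metis assms vector_transpose_matrix)
  finally show ?thesis by (simp add: inner_commute)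
qed

lemma quad_expand:
  fixes C :: "real^'n^'n"
  assumes "transpose C = C"
  shows "(x + t *\<^sub>R d) \<bullet> (C *v (x + t *\<^sub>R d)) =
    x \<bullet> (C *v x) + t * (2 * (d \<bullet> (C *v x))) + t^2 * (d \<bullet> (C *v d))"
  using sym_inner[OF assms, of x d]
  by (simp add: algebra_simps inner_add_left inner_add_right power2_eq_square)

lemma psd_null:
  fixes M :: "real^'n^'n"
  assumes "psd M" and "u \<bullet> (M *v u) = 0"
  shows "M *v u = 0"
proof -
  have sym: "transpose M = M" using assms(1) by (simp add: psd_def)
  have key: "0 \<le> v \<bullet> (M *v u)" for v
  proof -
    have "0 \<le> 2 * (v \<bullet> (M *v u))"
    proof (rule quad_lemma[of 1])
      fix t :: real
      show "0 \<le> t * (2 * (v \<bullet> (M *v u))) + t^2 * (v \<bullet> (M *v v))"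
        using assms(1) quad_expand[OF sym, of u t v] assms(2) unfolding psd_def
        by (metis add_0)
    qed simp
    thus ?thesis by simp
  qed
  have "0 \<le> (- (M *v u)) \<bullet> (M *v u)" by (rule key)
  hence "(M *v u) \<bullet> (M *v u) \<le> 0" by simp
  thus ?thesis by (metis inner_eq_zero_iff inner_ge_zero order_antisym)
qed

lemma inner_axis1: "axis i (1::real) \<bullet> x = x $ i"
  by (simp add: inner_axis')

lemma zero_Au_nonneg:
  fixes A :: "real^'n^'n"
  assumes "copositive A" and "is_zero_of A u"
  shows "0 \<le> (A *v u) $ i"
proof -
  have sym: "transpose A = A" using assms(1) by (simp add: copositive_def)
  have "0 \<le> 2 * (axis i 1 \<bullet> (A *v u))"
  proof (rule quad_lemma[of 1])
    fix t :: real assume t: "0 < t"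
    have "nonneg_vec (u + t *\<^sub>R axis i 1)"
      using assms(2) t unfolding is_zero_of_def nonneg_vec_def by (auto simp: axis_def)
    hence "0 \<le> (u + t *\<^sub>R axis i 1) \<bullet> (A *v (u + t *\<^sub>R axis i 1))"
      using assms(1) by (simp add: copositive_def)
    thus "0 \<le> t * (2 * (axis i 1 \<bullet> (A *v u))) + t^2 * (axis i 1 \<bullet> (A *v axis i 1))"
      using quad_expand[OF sym, of u t "axis i 1"] assms(2) by (simp add: is_zero_of_def)
  qed simp
  thus ?thesis by (simp add: inner_axis1)
qed

lemma quad_sum: "u \<bullet> (C *v u) = (\<Sum>i\<in>UNIV. u$i * (C *v u)$i)"
  by (simp add: inner_vec_def)

lemma zero_Au_supp:
  fixes A :: "real^'n^'n"
  assumes "copositive A" and "is_zero_of A u" and "u $ i \<noteq> 0"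
  shows "(A *v u) $ i = 0"
proof -
  have nn: "\<And>j. j\<in>UNIV \<Longrightarrow> 0 \<le> u$j * (A *v u)$j"
    using zero_Au_nonneg[OF assms(1,2)] assms(2) by (simp add: is_zero_of_def nonneg_vec_def)
  have "(\<Sum>j\<in>UNIV. u$j * (A *v u)$j) = 0" using assms(2) by (simp add: is_zero_of_def quad_sum)
  moreover have "(\<Sum>j\<in>UNIV. u$j * (A *v u)$j) = 0 \<longleftrightarrow> (\<forall>j\<in>UNIV. u$j * (A *v u)$j = 0)"
    by (rule sum_nonneg_eq_0_iff) (simp_all add: nn)
  ultimately have "u$i * (A *v u)$i = 0" by blast
  thus ?thesis using assms(3) by simp
qed

lemma zero_orth:
  fixes A :: "real^'n^'n"
  assumes "copositive A" and "is_zero_of A u" and "supp v \<subseteq> supp u"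
  shows "v \<bullet> (A *v u) = 0"
proof -
  have "\<forall>j\<in>UNIV. v$j * (A *v u)$j = 0"
    using zero_Au_supp[OF assms(1,2)] assms(3) by (auto simp: supp_def)
  hence "(\<Sum>j\<in>UNIV. v$j * (A *v u)$j) = 0" by (intro sum.neutral) blast
  thus ?thesis by (simp add: inner_vec_def)
qed

lemma zero_in_span:
  fixes A :: "real^'n^'n"
  assumes cop: "copositive A"
  shows "is_zero_of A u \<Longrightarrow> u \<in> span {u. is_minimal_zero A u}"
proof (induction "card (supp u)" arbitrary: u rule: less_induct)
  case less
  have sym: "transpose A = A" using cop by (simp add: copositive_def)
  show ?case
  proof (cases "is_minimal_zero A u")
    case True thus ?thesis by (simp add: span_base)
  next
    case False
    then obtain v where v: "is_zero_of A v" "supp v \<subset> supp u"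
      using less.prems by (auto simp: is_minimal_zero_def)
    have vspan: "v \<in> span {u. is_minimal_zero A u}"
      by (rule less.hyps[OF psubset_card_mono[OF finite v(2)] v(1)])
    have unn: "\<And>i. 0 \<le> u$i" and vnn: "\<And>i. 0 \<le> v$i"
      using less.prems v(1) by (auto simp: is_zero_of_def nonneg_vec_def)
    define I where "I = {i. v$i \<noteq> 0}"
    have "I \<noteq> {}" using v(1) by (auto simp: I_def is_zero_of_def vec_eq_iff)
    have Ipos: "\<And>i. i \<in> I \<Longrightarrow> 0 < v$i \<and> 0 < u$i"
    proof -
      fix i assume "i \<in> I"
      hence "v$i \<noteq> 0" "u$i \<noteq> 0" using v(2) by (auto simp: I_def supp_def)
      thus "0 < v$i \<and> 0 < u$i" using unn[of i] vnn[of i] by auto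
    qed
    define t where "t = Min ((\<lambda>i. u$i / v$i) ` I)"
    obtain i0 where i0: "i0 \<in> I" "t = u$i0 / v$i0"
    proof -
      have "t \<in> (\<lambda>i. u$i / v$i) ` I" unfolding t_def
        by (rule Min_in) (use \<open>I \<noteq> {}\<close> in auto)
      thus ?thesis using that by blast
    qed
    have tle: "\<And>i. i \<in> I \<Longrightarrow> t \<le> u$i / v$i" by (simp add: t_def)
    have t0: "0 < t" using i0 Ipos[OF i0(1)] by simp
    define w where "w = u + (-t) *\<^sub>R v"
    have wnn: "\<And>i. 0 \<le> w$i"
    proof -
      fix i
      show "0 \<le> w$i"
      proof (cases "i \<in> I")
        case True
        have "t * v$i \<le> u$i" using tle[OF True] Ipos[OF True] by (simp add: le_divide_eq)
        thus ?thesis by (simp add: w_def)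
      next
        case False thus ?thesis using unn[of i] by (simp add: w_def I_def)
      qed
    qed
    have wi0: "w$i0 = 0" using i0 Ipos[OF i0(1)] by (simp add: w_def)
    have suppw: "supp w \<subset> supp u"
    proof -
      have "supp w \<subseteq> supp u" using v(2) by (auto simp: supp_def w_def)
      moreover have "i0 \<in> supp u" "i0 \<notin> supp w" using wi0 Ipos[OF i0(1)] by (auto simp: supp_def)
      ultimately show ?thesis by blast
    qed
    have uw: "u = w + t *\<^sub>R v" by (simp add: w_def)
    show ?thesis
    proof (cases "w = 0")
      case True
      hence "u = t *\<^sub>R v" using uw by simp
      thus ?thesis using vspan by (simp add: span_mul)
    next
      case False
      have "v \<bullet> (A *v u) = 0" by (rule zero_orth[OF cop less.prems]) (use v(2) in auto)
      hence "w \<bullet> (A *v w) = 0"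
        using quad_expand[OF sym, of u "-t" v] less.prems v(1) by (simp add: w_def is_zero_of_def)
      hence "is_zero_of A w" using False wnn by (simp add: is_zero_of_def nonneg_vec_def)
      hence "w \<in> span {u. is_minimal_zero A u}"
        by (rule less.hyps[OF psubset_card_mono[OF finite suppw]])
      thus ?thesis using vspan uw by (simp add: span_add span_mul)
    qed
  qed
qed

definition outer :: "real^'n \<Rightarrow> real^'n^'n" where
  "outer a = (\<chi> i j. a$i * a$j)"

lemma outer_mult: "outer a *v x = (a \<bullet> x) *\<^sub>R a"
  by (simp add: outer_def matrix_vector_mult_def vec_eq_iff inner_vec_def sum_distrib_left
      algebra_simps)

lemma outer_transpose: "transpose (outer a) = outer a"
  by (simp add: outer_def transpose_def vec_eq_iff mult.commute)

lemma outer_psd: "psd (outer a)"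
  by (simp add: psd_def outer_transpose outer_mult inner_commute)

lemma outer_nz: "a \<noteq> 0 \<Longrightarrow> outer a \<noteq> 0"
  by (auto simp: outer_def vec_eq_iff)

definition stdsimp :: "(real^'n) set" where
  "stdsimp = {x. nonneg_vec x \<and> sum (\<lambda>i. x$i) UNIV = 1}"

lemma cont_quad: "continuous_on S (\<lambda>x::real^'n. x \<bullet> (C *v x))"
  by (intro continuous_intros linear_continuous_on linear_linear matrix_vector_mul_linear)

lemma stdsimp_norm: "x \<in> stdsimp \<Longrightarrow> norm x \<le> 1"
proof -
  assume "x \<in> stdsimp"
  hence "sum (\<lambda>i. \<bar>x$i\<bar>) UNIV = 1" by (simp add: stdsimp_def nonneg_vec_def)
  thus ?thesis using norm_le_l1_cart[of x] by simp
qed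

lemma compact_stdsimp_J: "compact (stdsimp \<inter> {x. supp x \<subseteq> J})"
proof (rule compact_eq_bounded_closed[THEN iffD2], rule conjI)
  show "bounded (stdsimp \<inter> {x. supp x \<subseteq> J})"
    by (rule bounded_subset[OF bounded_cball[of 0 1]]) (auto dest: stdsimp_norm)
  have eq: "stdsimp \<inter> {x. supp x \<subseteq> J} =
     (\<Inter>i. {x. 0 \<le> x$i}) \<inter> {x. sum (\<lambda>i. x$i) UNIV = 1} \<inter> (\<Inter>i\<in>-J. {x. x$i = 0})"
    by (auto simp: stdsimp_def nonneg_vec_def supp_def)
  show "closed (stdsimp \<inter> {x. supp x \<subseteq> J})"
    unfolding eq
    by (intro closed_Int closed_INT closed_Collect_le closed_Collect_eq continuous_intros ballI)
qed

lemma strict_J: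
  fixes A :: "real^'n^'n"
  assumes cop: "copositive A"
  shows "\<exists>e>0. (\<not> (\<exists>u. is_zero_of A u \<and> supp u \<subseteq> J)) \<longrightarrow>
           (\<forall>x\<in>stdsimp. supp x \<subseteq> J \<longrightarrow> e \<le> x \<bullet> (A *v x))"
proof (cases "(\<exists>u. is_zero_of A u \<and> supp u \<subseteq> J) \<or> stdsimp \<inter> {x. supp x \<subseteq> J} = {}")
  case True thus ?thesis by (intro exI[of _ 1]) auto
next
  case False
  hence nz: "\<not> (\<exists>u. is_zero_of A u \<and> supp u \<subseteq> J)" and ne: "stdsimp \<inter> {x. supp x \<subseteq> J} \<noteq> {}"
    by auto
  obtain x0 where x0: "x0 \<in> stdsimp \<inter> {x. supp x \<subseteq> J}"
    "\<And>y. y \<in> stdsimp \<inter> {x. supp x \<subseteq> J} \<Longrightarrow> x0 \<bullet> (A *v x0) \<le> y \<bullet> (A *v y)"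
    using continuous_attains_inf[OF compact_stdsimp_J ne cont_quad] by blast
  have "x0 \<noteq> 0" using x0(1) by (auto simp: stdsimp_def)
  hence "x0 \<bullet> (A *v x0) \<noteq> 0" using x0(1) nz by (auto simp: is_zero_of_def stdsimp_def)
  moreover have "0 \<le> x0 \<bullet> (A *v x0)" using x0(1) cop by (auto simp: stdsimp_def copositive_def)
  ultimately have "0 < x0 \<bullet> (A *v x0)" by simp
  thus ?thesis using x0(2) by (intro exI[of _ "x0 \<bullet> (A *v x0)"]) auto
qed

lemma kkt:
  fixes B :: "real^'n^'n"
  assumes symB: "transpose B = B" and x0: "x0 \<in> stdsimp"
    and mn: "\<And>y. y \<in> stdsimp \<Longrightarrow> x0 \<bullet> (B *v x0) \<le> y \<bullet> (B *v y)"
    and j: "x0$j \<noteq> 0"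
  shows "(B *v x0)$j \<le> (B *v x0)$i"
proof (cases "i = j")
  case True thus ?thesis by simp
next
  case False
  define d :: "real^'n" where "d = axis i 1 - axis j 1"
  have x0nn: "\<And>k. 0 \<le> x0$k" using x0 by (simp add: stdsimp_def nonneg_vec_def)
  hence jpos: "0 < x0$j" using j by (metis order_le_neq_trans)
  have "0 \<le> 2 * (d \<bullet> (B *v x0))"
  proof (rule quad_lemma[OF jpos])
    fix t :: real assume t: "0 < t" "t < x0$j"
    have "x0 + t *\<^sub>R d \<in> stdsimp"
    proof -
      have "0 \<le> (x0 + t *\<^sub>R d)$k" for k
        using x0nn[of k] t False by (auto simp: d_def axis_def)
      moreover have "sum (\<lambda>k. (x0 + t *\<^sub>R d)$k) UNIV = sum (\<lambda>k. x0$k) UNIV"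
      proof -
        have ax: "sum (\<lambda>k. axis l (1::real) $ k) UNIV = 1" for l
          by (simp add: axis_def)
        have "sum (\<lambda>k. (x0 + t *\<^sub>R d)$k) UNIV =
           sum (\<lambda>k. x0$k) UNIV + t * sum (\<lambda>k. axis i (1::real) $ k) UNIV - t * sum (\<lambda>k. axis j (1::real) $ k) UNIV"
          by (simp add: d_def sum.distrib sum_subtractf sum_distrib_left algebra_simps)
        thus ?thesis by (simp add: ax)
      qed
      ultimately show ?thesis using x0 by (simp add: stdsimp_def nonneg_vec_def)
    qed
    from mn[OF this] show "0 \<le> t * (2 * (d \<bullet> (B *v x0))) + t^2 * (d \<bullet> (B *v d))"
      using quad_expand[OF symB, of x0 t d] by simp
  qed
  thus ?thesis by (simp add: d_def inner_diff_left inner_axis1)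
qed

lemma reduce:
  fixes A :: "real^'n^'n" and a :: "real^'n"
  assumes cop: "copositive A" and orth: "\<And>u. is_zero_of A u \<Longrightarrow> a \<bullet> u = 0"
  shows "\<exists>\<epsilon>>0. copositive (A - \<epsilon> *\<^sub>R outer a)"
proof -
  have symA: "transpose A = A" using cop by (simp add: copositive_def)
  have ex: "\<forall>J. \<exists>e>0. (\<not> (\<exists>u. is_zero_of A u \<and> supp u \<subseteq> J)) \<longrightarrow>
           (\<forall>x\<in>stdsimp. supp x \<subseteq> J \<longrightarrow> e \<le> x \<bullet> (A *v x))"
    using strict_J[OF cop] by blast
  then obtain E where E: "\<And>J. E J > 0" "\<And>J. (\<not> (\<exists>u. is_zero_of A u \<and> supp u \<subseteq> J)) \<Longrightarrow>
           (\<forall>x\<in>stdsimp. supp x \<subseteq> J \<longrightarrow> E J \<le> x \<bullet> (A *v x))"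
  proof -
    from choice[OF ex] obtain E where
      "\<forall>J. E J > 0 \<and> ((\<not> (\<exists>u. is_zero_of A u \<and> supp u \<subseteq> J)) \<longrightarrow>
           (\<forall>x\<in>stdsimp. supp x \<subseteq> J \<longrightarrow> E J \<le> x \<bullet> (A *v x)))" by blast
    thus ?thesis using that by blast
  qed
  define e0 where "e0 = Min (range E)"
  have fin: "finite (range E)" by simp
  have "e0 \<in> range E" unfolding e0_def by (rule Min_in[OF fin]) simp
  hence e0pos: "0 < e0" using E(1) by auto
  have e0le: "\<And>J. e0 \<le> E J" unfolding e0_def by (rule Min_le[OF fin]) simp
  define \<epsilon> where "\<epsilon> = e0 / ((norm a)^2 + 1)"
  have "0 < (norm a)^2 + 1" by (simp add: add_nonneg_pos)
  hence epos: "0 < \<epsilon>" using e0pos unfolding \<epsilon>_def by (intro divide_pos_pos)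
  have enorm: "\<epsilon> * (norm a)^2 < e0"
  proof -
    have "\<epsilon> * (norm a)^2 = e0 * ((norm a)^2 / ((norm a)^2 + 1))" by (simp add: \<epsilon>_def)
    also have "\<dots> < e0 * 1"
      by (rule mult_strict_left_mono) (use e0pos \<open>0 < (norm a)^2 + 1\<close> in \<open>simp_all add: divide_less_eq\<close>)
    finally show ?thesis by simp
  qed
  define B where "B = A - \<epsilon> *\<^sub>R outer a"
  have "transpose B = transpose A - \<epsilon> *\<^sub>R transpose (outer a)"
    by (simp add: B_def transpose_def vec_eq_iff)
  hence symB: "transpose B = B" by (simp add: symA outer_transpose B_def)
  have Bq: "\<And>x y. x \<bullet> (B *v y) = x \<bullet> (A *v y) - \<epsilon> * ((a \<bullet> x) * (a \<bullet> y))"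
    by (simp add: B_def matrix_vector_mult_diff_rdistrib scaleR_matrix_vector_assoc[symmetric]
        outer_mult inner_diff_right inner_commute)
  have main: "\<forall>x\<in>stdsimp. 0 \<le> x \<bullet> (B *v x)"
  proof (rule ccontr)
    assume neg: "\<not> (\<forall>x\<in>stdsimp. 0 \<le> x \<bullet> (B *v x))"
    have ne: "(stdsimp :: (real^'n) set) \<noteq> {}" using neg by blast
    have cpt: "compact (stdsimp :: (real^'n) set)" using compact_stdsimp_J[of UNIV] by simp
    obtain x0 where x0: "x0 \<in> stdsimp" "\<And>y. y \<in> stdsimp \<Longrightarrow> x0 \<bullet> (B *v x0) \<le> y \<bullet> (B *v y)"
      using continuous_attains_inf[OF cpt ne cont_quad] by blast
    have fneg: "x0 \<bullet> (B *v x0) < 0"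
    proof -
      obtain y where y: "y \<in> stdsimp" "y \<bullet> (B *v y) < 0" using neg by force
      thus ?thesis using x0(2)[OF y(1)] by simp
    qed
    have x0nn: "\<And>k. 0 \<le> x0$k" using x0(1) by (simp add: stdsimp_def nonneg_vec_def)
    have x0sum: "sum (\<lambda>k. x0$k) UNIV = 1" using x0(1) by (simp add: stdsimp_def)
    define J where "J = supp x0"
    show False
    proof (cases "\<exists>u. is_zero_of A u \<and> supp u \<subseteq> J")
      case False
      have "E J \<le> x0 \<bullet> (A *v x0)" using E(2)[OF False] x0(1) by (simp add: J_def)
      hence c1: "e0 \<le> x0 \<bullet> (A *v x0)" using e0le[of J] by linarith
      have "\<bar>a \<bullet> x0\<bar> \<le> norm a * norm x0" by (rule Cauchy_Schwarz_ineq2)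
      also have "\<dots> \<le> norm a" using stdsimp_norm[OF x0(1)] by (simp add: mult_left_le)
      finally have "\<bar>a \<bullet> x0\<bar>^2 \<le> (norm a)^2" by (intro power_mono) auto
      hence "(a \<bullet> x0)^2 \<le> (norm a)^2" by simp
      hence "\<epsilon> * ((a \<bullet> x0) * (a \<bullet> x0)) \<le> \<epsilon> * (norm a)^2"
        using epos by (simp add: power2_eq_square)
      hence "0 < x0 \<bullet> (B *v x0)" using Bq[of x0 x0] c1 enorm by linarith
      thus False using fneg by simp
    next
      case True
      then obtain u where u: "is_zero_of A u" "supp u \<subseteq> J" by blast
      have "J \<noteq> {}"
      proof
        assume "J = {}"
        hence "\<And>k. x0$k = 0" by (auto simp: J_def supp_def)
        thus False using x0sum by simp
      qed
      then obtain i0 where i0: "i0 \<in> J" by blast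
      define lam where "lam = (B *v x0)$i0"
      have eqJ: "\<And>k. k \<in> J \<Longrightarrow> (B *v x0)$k = lam"
      proof -
        fix k assume k: "k \<in> J"
        have "(B *v x0)$k \<le> (B *v x0)$i0"
        proof (rule kkt[OF symB x0(1) x0(2)])
          show "x0$k \<noteq> 0" using k by (simp add: J_def supp_def)
        qed
        moreover have "(B *v x0)$i0 \<le> (B *v x0)$k"
        proof (rule kkt[OF symB x0(1) x0(2)])
          show "x0$i0 \<noteq> 0" using i0 by (simp add: J_def supp_def)
        qed
        ultimately show "(B *v x0)$k = lam" by (simp add: lam_def)
      qed
      have "x0 \<bullet> (B *v x0) = (\<Sum>k\<in>UNIV. x0$k * lam)"
        unfolding quad_sum
      proof (rule sum.cong)
        fix k :: 'n
        show "x0$k * (B *v x0)$k = x0$k * lam"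
        proof (cases "x0$k = 0")
          case False thus ?thesis using eqJ[of k] by (simp add: J_def supp_def)
        qed simp
      qed simp
      also have "\<dots> = lam" using x0sum by (simp add: sum_distrib_right[symmetric])
      finally have lamneg: "lam < 0" using fneg by simp
      have unn: "\<And>k. 0 \<le> u$k" using u(1) by (simp add: is_zero_of_def nonneg_vec_def)
      obtain k0 where "u$k0 \<noteq> 0" using u(1) by (auto simp: is_zero_of_def vec_eq_iff)
      hence "0 < u$k0" using unn[of k0] by (metis order_le_neq_trans)
      hence upos: "0 < (\<Sum>k\<in>UNIV. u$k)" by (intro sum_pos2[where i=k0]) (auto simp: unn)
      have "u \<bullet> (B *v x0) = (\<Sum>k\<in>UNIV. u$k * lam)"
        unfolding inner_vec_def inner_real_def
      proof (rule sum.cong)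
        fix k :: 'n
        show "u$k * (B *v x0)$k = u$k * lam"
        proof (cases "u$k = 0")
          case False thus ?thesis using eqJ[of k] u(2) by (auto simp: supp_def)
        qed simp
      qed simp
      also have "\<dots> = lam * (\<Sum>k\<in>UNIV. u$k)" by (simp add: sum_distrib_left mult.commute)
      finally have "u \<bullet> (B *v x0) < 0" using lamneg upos by (simp add: mult_neg_pos)
      moreover have "u \<bullet> (B *v x0) = u \<bullet> (A *v x0)" using Bq[of u x0] orth[OF u(1)] by simp
      moreover have "u \<bullet> (A *v x0) = x0 \<bullet> (A *v u)" by (rule sym_inner[OF symA])
      moreover have "0 \<le> x0 \<bullet> (A *v u)"
        unfolding inner_vec_def inner_real_def
        by (intro sum_nonneg mult_nonneg_nonneg x0nn zero_Au_nonneg[OF cop u(1)])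
      ultimately show False by simp
    qed
  qed
  have "copositive B"
    unfolding copositive_def
  proof (intro conjI allI impI symB)
    fix x :: "real^'n" assume xnn: "nonneg_vec x"
    show "0 \<le> x \<bullet> (B *v x)"
    proof (cases "x = 0")
      case True thus ?thesis by simp
    next
      case False
      define s where "s = (\<Sum>k\<in>UNIV. x$k)"
      obtain k0 where "x$k0 \<noteq> 0" using False by (auto simp: vec_eq_iff)
      hence "0 < x$k0" using xnn by (metis nonneg_vec_def order_le_neq_trans)
      hence spos: "0 < s" unfolding s_def using xnn
        by (intro sum_pos2[where i=k0]) (auto simp: nonneg_vec_def)
      define y where "y = (1/s) *\<^sub>R x"
      have "y \<in> stdsimp"
      proof -
        have "sum (\<lambda>k. y$k) UNIV = (1/s) * s" by (simp add: y_def s_def sum_distrib_left)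
        thus ?thesis using xnn spos by (simp add: y_def stdsimp_def nonneg_vec_def)
      qed
      hence "0 \<le> y \<bullet> (B *v y)" using main by blast
      moreover have "x = s *\<^sub>R y" using spos by (simp add: y_def)
      ultimately show ?thesis
        using spos by (simp add: matrix_vector_mult_scaleR)
    qed
  qed
  thus ?thesis using epos by (auto simp: B_def)
qed

theorem theorem4p5:
  fixes A :: "real^'n^'n"
  assumes "copositive A"
  shows "(irreducible_wrt A {M. psd M} \<longleftrightarrow> span {u. is_minimal_zero A u} = UNIV)
    \<and> (irreducible_wrt A {M. psd M} \<longrightarrow>
         (\<exists>S. S \<subseteq> {u. is_minimal_zero A u} \<and> independent S \<and> card S = CARD('n)))"
proof -
  note cop = assms
  define Z where "Z = {u. is_minimal_zero A u}"
  have symA: "transpose A = A" using cop by (simp add: copositive_def)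
  have dir1: "span Z = UNIV" if irr: "irreducible_wrt A {M. psd M}"
  proof (rule ccontr)
    assume nf: "span Z \<noteq> UNIV"
    have "dim Z < DIM(real^'n)"
      using nf dim_eq_full[of Z] dim_subset_UNIV[of Z] by linarith
    then obtain a :: "real^'n" where a: "a \<noteq> 0" "\<And>y. y \<in> span Z \<Longrightarrow> orthogonal a y"
      using orthogonal_to_subspace_exists[of Z] by blast
    have "\<And>u. is_zero_of A u \<Longrightarrow> a \<bullet> u = 0"
      using a(2) zero_in_span[OF cop] by (auto simp: orthogonal_def Z_def)
    then obtain \<epsilon> where "\<epsilon> > 0" "copositive (A - \<epsilon> *\<^sub>R outer a)"
      using reduce[OF cop] by blast
    hence "\<not> irreducible_wrt A {M. psd M}"
      using outer_psd[of a] outer_nz[OF a(1)] unfolding irreducible_wrt_def by blast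
    thus False using irr by simp
  qed
  have dir2: "irreducible_wrt A {M. psd M}" if sp: "span Z = UNIV"
    unfolding irreducible_wrt_def
  proof
    assume "\<exists>\<gamma>>0. \<exists>M\<in>{M. psd M} - {0}. copositive (A - \<gamma> *\<^sub>R M)"
    then obtain \<gamma> M where g: "\<gamma> > 0" and M: "psd M" "M \<noteq> 0" and c: "copositive (A - \<gamma> *\<^sub>R M)"
      by blast
    have Mu: "M *v u = 0" if "u \<in> Z" for u
    proof -
      have u: "is_zero_of A u" using that by (simp add: Z_def is_minimal_zero_def)
      have "0 \<le> u \<bullet> ((A - \<gamma> *\<^sub>R M) *v u)" using c u by (simp add: copositive_def is_zero_of_def)
      also have "u \<bullet> ((A - \<gamma> *\<^sub>R M) *v u) = u \<bullet> (A *v u) - \<gamma> * (u \<bullet> (M *v u))"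
        by (simp add: matrix_vector_mult_diff_rdistrib scaleR_matrix_vector_assoc[symmetric] inner_diff_right)
      finally have "\<gamma> * (u \<bullet> (M *v u)) \<le> 0" using u by (simp add: is_zero_of_def)
      hence "u \<bullet> (M *v u) \<le> 0" using g by (simp add: mult_le_0_iff)
      moreover have "0 \<le> u \<bullet> (M *v u)" using M(1) by (simp add: psd_def)
      ultimately show ?thesis using psd_null[OF M(1)] by simp
    qed
    have sub: "subspace {v. M *v v = 0}"
      by (auto simp: subspace_def matrix_vector_right_distrib matrix_vector_mult_scaleR)
    have "span Z \<subseteq> {v. M *v v = 0}" by (rule span_minimal) (use Mu sub in auto)
    hence "\<forall>v. M *v v = 0 *v v" using sp by auto
    hence "M = 0" by (simp add: matrix_eq)
    thus False using M(2) by simp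
  qed
  have dir3: "\<exists>S. S \<subseteq> Z \<and> independent S \<and> card S = CARD('n)" if sp: "span Z = UNIV"
  proof -
    obtain S where S: "S \<subseteq> Z" "independent S" "Z \<subseteq> span S"
      by (rule maximal_independent_subset)
    have "span Z \<subseteq> span S" using S(3) by (metis span_minimal subspace_span)
    hence "span S = UNIV" using sp by auto
    hence "card S = dim (UNIV :: (real^'n) set)" using dim_span_eq_card_independent[OF S(2)] by simp
    also have "\<dots> = CARD('n)" by simp
    finally show ?thesis using S by blast
  qed
  show ?thesis using dir1 dir2 dir3 by (auto simp: Z_def)
qed

end
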